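(* There is an absolute constant $C>0$ such that for every $0<\delta\leq 1$ and every integer $d\geq 1$, every $n$-vertex trigraph $T$ with minimum degree at least $\delta n$ and VC-dimension at most $d$ has domination number $\gamma(T)\leq C\cdot\frac{d}{\delta}\ln\frac{2}{\delta}$.
   Context: A trigraph is $T=(V,E,R)$ where $V$ is a finite vertex set, $E$ (plain edges) and $R$ (red edges) are disjoint sets of unordered pairs of distinct vertices. For $v\in V$: $N(v)$ is the set of plain neighbours, $N[v]=N(v)\cup\{v\}$, $R(v)$ the set of red neighbours. The minimum degree is $\min_v|N(v)|$. A dominating set is a set $X$ such that every $y\in V$ lies in $N[x]\cup R(x)$ for some $x\in X$; $\gamma(T)$ is the minimum size of a dominating set. A set $X\subseteq V$ is shattered if there is a set $S$ of $2^{|X|}$ vertices, none having a red neighbour in $X$, such that for every $Y\subseteq X$ some $v_Y\in S$ has $N[v_Y]\cap X=Y$. The VC-dimension of $T$ is the largest size of a shattered set. *)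

theory Defs
  imports "HOL-Analysis.Analysis"
begin

record 'a trigraph =
  verts :: "'a set"
  plain :: "'a set set"
  red   :: "'a set set"

definition is_trigraph :: "'a trigraph \<Rightarrow> bool" where
  "is_trigraph T \<longleftrightarrow> finite (verts T)
     \<and> (\<forall>e \<in> plain T. \<exists>u v. e = {u, v} \<and> u \<noteq> v \<and> u \<in> verts T \<and> v \<in> verts T)
     \<and> (\<forall>e \<in> red T. \<exists>u v. e = {u, v} \<and> u \<noteq> v \<and> u \<in> verts T \<and> v \<in> verts T)
     \<and> plain T \<inter> red T = {}"

definition nbr :: "'a trigraph \<Rightarrow> 'a \<Rightarrow> 'a set" where
  "nbr T v = {u \<in> verts T. {u, v} \<in> plain T}"

definition cnbr :: "'a trigraph \<Rightarrow> 'a \<Rightarrow> 'a set" where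
  "cnbr T v = insert v (nbr T v)"

definition rnbr :: "'a trigraph \<Rightarrow> 'a \<Rightarrow> 'a set" where
  "rnbr T v = {u \<in> verts T. {u, v} \<in> red T}"

definition min_degree_ge :: "'a trigraph \<Rightarrow> real \<Rightarrow> bool" where
  "min_degree_ge T k \<longleftrightarrow> (\<forall>v \<in> verts T. real (card (nbr T v)) \<ge> k)"

definition dominating :: "'a trigraph \<Rightarrow> 'a set \<Rightarrow> bool" where
  "dominating T X \<longleftrightarrow> X \<subseteq> verts T \<and>
     (\<forall>y \<in> verts T. \<exists>x \<in> X. y \<in> cnbr T x \<union> rnbr T x)"

definition domination_number :: "'a trigraph \<Rightarrow> nat" where
  "domination_number T = (LEAST k. \<exists>X. dominating T X \<and> card X = k)"

definition shattered :: "'a trigraph \<Rightarrow> 'a set \<Rightarrow> bool" where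
  "shattered T X \<longleftrightarrow> X \<subseteq> verts T \<and>
     (\<exists>S \<subseteq> verts T. card S = 2 ^ card X
        \<and> (\<forall>v \<in> S. rnbr T v \<inter> X = {})
        \<and> (\<forall>Y \<subseteq> X. \<exists>v \<in> S. cnbr T v \<inter> X = Y))"

definition vc_dim_le :: "'a trigraph \<Rightarrow> nat \<Rightarrow> bool" where
  "vc_dim_le T d \<longleftrightarrow> (\<forall>X. shattered T X \<longrightarrow> card X \<le> d)"

end

theory Submission
  imports Defs
begin

definition shat :: "'b set set \<Rightarrow> 'b set \<Rightarrow> bool" where
  "shat F P \<longleftrightarrow> (\<forall>Q \<subseteq> P. \<exists>K\<in>F. K \<inter> P = Q)"

lemma pajor:
  assumes "finite D" "F \<subseteq> Pow D"
  shows "card F \<le> card {P. P \<subseteq> D \<and> shat F P}"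
  using assms
proof (induction D arbitrary: F rule: finite_induct)
  case empty
  show ?case
  proof (cases "F = {}")
    case True then show ?thesis by simp
  next
    case False
    with empty have F: "F = {{}}" by auto
    have "shat F {}" unfolding shat_def F by auto
    then have "{P. P \<subseteq> {} \<and> shat F P} = {{}}" by auto
    then show ?thesis using F by simp
  qed
next
  case (insert x D)
  define g where "g = (\<lambda>K. K - {x})"
  define Fa where "Fa = {K\<in>F. x \<notin> K}"
  define Fb where "Fb = {K\<in>F. x \<in> K}"
  define F0 where "F0 = g ` F"
  define F1 where "F1 = {K \<in> Pow D. K \<in> F \<and> insert x K \<in> F}"
  have finF: "finite F"
    by (rule finite_subset[OF insert.prems]) (simp add: insert.hyps(1))
  have F0D: "F0 \<subseteq> Pow D" using insert.prems unfolding F0_def g_def by auto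
  have F1D: "F1 \<subseteq> Pow D" unfolding F1_def by auto
  have cF: "card F = card Fa + card Fb"
  proof -
    have "F = Fa \<union> Fb" "Fa \<inter> Fb = {}" unfolding Fa_def Fb_def by auto
    moreover have "finite Fa" "finite Fb" using finF unfolding Fa_def Fb_def by auto
    ultimately show ?thesis using card_Un_disjoint[of Fa Fb] by simp
  qed
  have injg: "inj_on g Fb" unfolding inj_on_def g_def Fb_def by blast
  have F0eq: "F0 = Fa \<union> g ` Fb"
  proof -
    have "F = Fa \<union> Fb" unfolding Fa_def Fb_def by blast
    then have "F0 = g ` Fa \<union> g ` Fb" unfolding F0_def by (simp add: image_Un)
    moreover have "g ` Fa = Fa"
    proof -
      have "\<And>K. K \<in> Fa \<Longrightarrow> g K = K" unfolding g_def Fa_def by blast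
      then show ?thesis by simp
    qed
    ultimately show ?thesis by simp
  qed
  have F1eq: "F1 = Fa \<inter> g ` Fb"
  proof
    show "F1 \<subseteq> Fa \<inter> g ` Fb"
    proof
      fix K assume K: "K \<in> F1"
      then have "x \<notin> K" using insert.hyps(2) unfolding F1_def by auto
      moreover have "g (insert x K) = K" using \<open>x \<notin> K\<close> unfolding g_def by auto
      moreover have "insert x K \<in> Fb" using K unfolding F1_def Fb_def by auto
      ultimately have "K \<in> g ` Fb" by (metis image_eqI)
      moreover have "K \<in> Fa" using K \<open>x \<notin> K\<close> unfolding F1_def Fa_def by auto
      ultimately show "K \<in> Fa \<inter> g ` Fb" by blast
    qed
  next
    show "Fa \<inter> g ` Fb \<subseteq> F1"
    proof
      fix K assume K: "K \<in> Fa \<inter> g ` Fb"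
      then obtain K' where K': "K' \<in> F" "x \<in> K'" "K = K' - {x}"
        unfolding Fb_def g_def by auto
      have "insert x K = K'" using K' by auto
      moreover have "K \<subseteq> D" using K' insert.prems by auto
      ultimately show "K \<in> F1" using K K' unfolding F1_def Fa_def by auto
    qed
  qed
  have finFa: "finite Fa" "finite (g ` Fb)" using finF unfolding Fa_def Fb_def by auto
  have cF01: "card F = card F0 + card F1"
  proof -
    have "card Fa + card (g ` Fb) = card (Fa \<union> g ` Fb) + card (Fa \<inter> g ` Fb)"
      by (rule card_Un_Int[OF finFa])
    moreover have "card (g ` Fb) = card Fb" by (rule card_image[OF injg])
    ultimately show ?thesis unfolding F0eq F1eq cF by linarith
  qed
  have IH0: "card F0 \<le> card {P. P \<subseteq> D \<and> shat F0 P}" using insert.IH[OF F0D] .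
  have IH1: "card F1 \<le> card {P. P \<subseteq> D \<and> shat F1 P}" using insert.IH[OF F1D] .
  define S0 where "S0 = {P. P \<subseteq> D \<and> shat F0 P}"
  define S1 where "S1 = {P. P \<subseteq> D \<and> shat F1 P}"
  have sub0: "S0 \<subseteq> {P. P \<subseteq> insert x D \<and> shat F P}"
  proof
    fix P assume P: "P \<in> S0"
    have PD: "P \<subseteq> D" and sh0: "shat F0 P" using P unfolding S0_def by auto
    have xP: "x \<notin> P" using PD insert.hyps(2) by blast
    have "shat F P" unfolding shat_def
    proof (intro allI impI)
      fix Q assume "Q \<subseteq> P"
      then obtain K0 where K0: "K0 \<in> F0" "K0 \<inter> P = Q" using sh0 unfolding shat_def by blast
      then obtain K where K: "K \<in> F" "K0 = K - {x}" unfolding F0_def g_def by blast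
      have "K \<inter> P = Q" using K K0(2) xP by blast
      then show "\<exists>K\<in>F. K \<inter> P = Q" using K(1) by blast
    qed
    then show "P \<in> {P. P \<subseteq> insert x D \<and> shat F P}" using PD by blast
  qed
  have sub1: "insert x ` S1 \<subseteq> {P. P \<subseteq> insert x D \<and> shat F P}"
  proof
    fix P' assume "P' \<in> insert x ` S1"
    then obtain P where P: "P \<in> S1" "P' = insert x P" by blast
    have PD: "P \<subseteq> D" and sh1: "shat F1 P" using P(1) unfolding S1_def by auto
    have xP: "x \<notin> P" using PD insert.hyps(2) by blast
    have "shat F P'" unfolding shat_def
    proof (intro allI impI)
      fix Q assume Q: "Q \<subseteq> P'"
      show "\<exists>K\<in>F. K \<inter> P' = Q"
      proof (cases "x \<in> Q")
        case True
        have "Q - {x} \<subseteq> P" using Q P(2) by blast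
        then obtain K where K: "K \<in> F1" "K \<inter> P = Q - {x}" using sh1 unfolding shat_def by blast
        then have "insert x K \<in> F" unfolding F1_def by blast
        moreover have "insert x K \<inter> P' = Q" using K(2) True P(2) by blast
        ultimately show ?thesis by blast
      next
        case False
        have "Q \<subseteq> P" using Q P(2) False by blast
        then obtain K where K: "K \<in> F1" "K \<inter> P = Q" using sh1 unfolding shat_def by blast
        then have KF: "K \<in> F" and "K \<subseteq> D" unfolding F1_def by auto
        then have "x \<notin> K" using insert.hyps(2) by blast
        then have "K \<inter> P' = Q" using K(2) P(2) by blast
        then show ?thesis using KF by blast
      qed
    qed
    then show "P' \<in> {P. P \<subseteq> insert x D \<and> shat F P}" using PD P(2) by blast
  qed
  have disj: "S0 \<inter> insert x ` S1 = {}"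
  proof -
    have "\<And>P. P \<in> S0 \<Longrightarrow> x \<notin> P" using insert.hyps(2) unfolding S0_def by blast
    then show ?thesis by blast
  qed
  have injx: "inj_on (insert x) S1"
  proof (rule inj_onI)
    fix A B assume A: "A \<in> S1" and B: "B \<in> S1" and e: "insert x A = insert x B"
    have "x \<notin> A" "x \<notin> B" using A B insert.hyps(2) unfolding S1_def by auto
    then have "A = insert x A - {x}" "B = insert x B - {x}" by auto
    then show "A = B" using e by metis
  qed
  have finS: "finite {P. P \<subseteq> insert x D \<and> shat F P}"
    by (rule finite_subset[of _ "Pow (insert x D)"]) (auto simp: insert.hyps(1))
  have "card S0 + card S1 = card (S0 \<union> insert x ` S1)"
    using card_Un_disjoint[of S0 "insert x ` S1"] disj card_image[OF injx]
      finite_subset[OF sub0 finS] finite_subset[OF sub1 finS] by simp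
  also have "\<dots> \<le> card {P. P \<subseteq> insert x D \<and> shat F P}"
    using sub0 sub1 finS by (intro card_mono) (assumption, rule Un_least)
  finally show ?case using cF01 IH0 IH1 unfolding S0_def S1_def by simp
qed

lemma card_small_subsets:
  assumes "finite D"
  shows "card {P. P \<subseteq> D \<and> card P \<le> d} \<le> (\<Sum>i\<le>d. card D choose i)"
proof -
  have "{P. P \<subseteq> D \<and> card P \<le> d} = (\<Union>i\<in>{..d}. {P. P \<subseteq> D \<and> card P = i})" by auto
  then have "card {P. P \<subseteq> D \<and> card P \<le> d} = card (\<Union>i\<in>{..d}. {P. P \<subseteq> D \<and> card P = i})"
    by simp
  also have "\<dots> \<le> (\<Sum>i\<le>d. card {P. P \<subseteq> D \<and> card P = i})"
    by (rule card_UN_le) simp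
  also have "\<dots> = (\<Sum>i\<le>d. card D choose i)" using n_subsets[OF assms] by simp
  finally show ?thesis .
qed

lemma sauer_numeric:
  assumes "1 \<le> d" "d \<le> L"
  shows "real (\<Sum>i\<le>d. L choose i) \<le> (exp 1 * real L / real d) ^ d"
proof -
  define x where "x = real d / real L"
  have x0: "0 < x" "x \<le> 1" using assms unfolding x_def by auto
  have "x ^ d * real (\<Sum>i\<le>d. L choose i) = (\<Sum>i\<le>d. real (L choose i) * x ^ d)"
    by (simp add: sum_distrib_left mult.commute)
  also have "\<dots> \<le> (\<Sum>i\<le>d. real (L choose i) * x ^ i)"
    by (intro sum_mono mult_left_mono power_decreasing) (use x0 in auto)
  also have "\<dots> \<le> (\<Sum>i\<le>L. real (L choose i) * x ^ i)"
    by (intro sum_mono2) (use assms x0 in auto)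
  also have "\<dots> = (1 + x) ^ L"
  proof -
    have "(x + 1) ^ L = (\<Sum>i\<le>L. real (L choose i) * x ^ i * 1 ^ (L - i))"
      by (rule binomial_ring)
    then show ?thesis by (simp add: add.commute)
  qed
  also have "\<dots> \<le> exp x ^ L"
    by (intro power_mono) (use x0 in auto)
  also have "\<dots> = exp (real d)"
    using assms unfolding x_def by (simp add: exp_of_nat_mult[symmetric])
  also have "\<dots> = exp 1 ^ d" by (simp add: exp_of_nat_mult[symmetric])
  finally have h: "x ^ d * real (\<Sum>i\<le>d. L choose i) \<le> exp 1 ^ d" .
  have "real (\<Sum>i\<le>d. L choose i) \<le> exp 1 ^ d / x ^ d"
    using h x0 by (simp add: field_simps)
  also have "\<dots> = (exp 1 * real L / real d) ^ d"
    unfolding x_def using assms by (simp add: power_divide field_simps)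
  finally show ?thesis .
qed

lemma binom_step:
  assumes "2 * M \<le> j" "j < 3 * M"
  shows "2 * (3 * M choose Suc j) \<le> 3 * M choose j"
proof -
  have e: "Suc j * (3*M choose Suc j) = (3*M - j) * (3*M choose j)"
    using binomial_absorption[of j "3*M"] binomial_absorb_comp[of "3*M" j] by simp
  have le: "2 * (3*M - j) \<le> Suc j" using assms by linarith
  have "Suc j * (2 * (3*M choose Suc j)) = 2 * (3*M - j) * (3*M choose j)"
    using e by (simp add: mult.assoc mult.left_commute)
  also have "\<dots> \<le> Suc j * (3*M choose j)" using le by (rule mult_le_mono1)
  finally have "Suc j * (2 * (3*M choose Suc j)) \<le> Suc j * (3*M choose j)" .
  then show ?thesis by (simp only: mult_le_cancel1)
qed

lemma binom_ratio:
  assumes "k \<le> M"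
  shows "2 ^ k * (3 * M choose (2 * M + k)) \<le> 3 * M choose (2 * M)"
  using assms
proof (induction k)
  case 0 then show ?case by simp
next
  case (Suc k)
  have "2 * (3 * M choose Suc (2*M + k)) \<le> 3 * M choose (2*M + k)"
    using Suc.prems by (intro binom_step) auto
  then have "2 ^ k * (2 * (3 * M choose Suc (2*M + k))) \<le> 2 ^ k * (3 * M choose (2*M + k))"
    by (rule mult_le_mono2)
  also have "\<dots> \<le> 3 * M choose (2 * M)" using Suc by simp
  finally show ?case by (simp add: mult.assoc mult.left_commute)
qed

lemma card_filter_real:
  assumes "finite A"
  shows "real (card {x\<in>A. P x}) = (\<Sum>x\<in>A. if P x then 1 else 0)"
proof -
  have "real (card {x\<in>A. P x}) = (\<Sum>x\<in>{x\<in>A. P x}. 1)" by simp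
  also have "\<dots> = (\<Sum>x\<in>A. if P x then 1 else 0)" using sum.inter_filter[OF assms, of "\<lambda>_. (1::real)" P] by simp
  finally show ?thesis .
qed

lemma count_PiE_J:
  assumes B: "finite B" and V: "finite V" and SV: "S \<subseteq> V" and J: "J \<subseteq> B" and n: "card V > 0"
  shows "real (card {w \<in> PiE B (\<lambda>_. V). \<forall>l\<in>J. w l \<in> S})
     = real (card V) ^ card B * (real (card S) / real (card V)) ^ card J"
proof -
  have eq: "{w \<in> PiE B (\<lambda>_. V). \<forall>l\<in>J. w l \<in> S} = PiE B (\<lambda>l. if l \<in> J then S else V)"
  proof (intro equalityI subsetI)
    fix w assume w: "w \<in> {w \<in> PiE B (\<lambda>_. V). \<forall>l\<in>J. w l \<in> S}"
    then show "w \<in> PiE B (\<lambda>l. if l \<in> J then S else V)" by (auto simp: PiE_iff)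
  next
    fix w assume w: "w \<in> PiE B (\<lambda>l. if l \<in> J then S else V)"
    then have "\<forall>l\<in>B. w l \<in> (if l \<in> J then S else V)" "w \<in> extensional B" by (auto simp: PiE_iff)
    then show "w \<in> {w \<in> PiE B (\<lambda>_. V). \<forall>l\<in>J. w l \<in> S}" using SV J
      by (auto simp: PiE_iff split: if_splits)
  qed
  have "card (PiE B (\<lambda>l. if l \<in> J then S else V)) = (\<Prod>l\<in>B. card (if l \<in> J then S else V))"
    by (rule card_PiE[OF B])
  also have "\<dots> = (\<Prod>l\<in>B. if l \<in> J then card S else card V)"
    by (intro prod.cong) auto
  also have "\<dots> = (\<Prod>l\<in>B \<inter> {l. l \<in> J}. card S) * (\<Prod>l\<in>B \<inter> - {l. l \<in> J}. card V)"
    by (rule prod.If_cases[OF B])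
  also have "\<dots> = card S ^ card J * card V ^ card (B - J)"
  proof -
    have "B \<inter> {l. l \<in> J} = J" "B \<inter> - {l. l \<in> J} = B - J" using J by auto
    then show ?thesis by simp
  qed
  finally have c: "card {w \<in> PiE B (\<lambda>_. V). \<forall>l\<in>J. w l \<in> S} = card S ^ card J * card V ^ card (B - J)"
    using eq by simp
  have cB: "card B = card J + card (B - J)"
    using J B by (metis card_Diff_subset finite_subset add_diff_inverse_nat card_mono not_le)
  have "real (card V) ^ card B * (real (card S) / real (card V)) ^ card J
     = real (card V) ^ card (B - J) * real (card S) ^ card J"
    unfolding cB using n by (simp add: power_add power_divide field_simps)
  then show ?thesis using c by simp
qed

lemma cheb_count:
  fixes B :: "nat set" and V :: "'a set"
  assumes B: "finite B" and V: "finite V" and SV: "S \<subseteq> V" and n: "card V > 0"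
    and dpos: "\<delta> > 0" and Sbig: "real (card S) \<ge> \<delta> * real (card V)"
    and M8: "\<delta> * real (card B) \<ge> 8" and kle: "real k \<le> \<delta> * real (card B) / 2"
  shows "real (card {w \<in> PiE B (\<lambda>_. V). k \<le> card {i\<in>B. w i \<in> S}}) \<ge> real (card V) ^ card B / 2"
proof -
  define W where "W = PiE B (\<lambda>_. V)"
  define q where "q = real (card V) ^ card B"
  define p where "p = real (card S) / real (card V)"
  define M where "M = real (card B)"
  define X where "X = (\<lambda>w. real (card {i\<in>B. w i \<in> S}))"
  define ind where "ind = (\<lambda>(w::nat \<Rightarrow> 'a) (i::nat). if w i \<in> S then 1 else (0::real))"
  have finW: "finite W" unfolding W_def using B V by (simp add: finite_PiE)
  have cW: "real (card W) = q" unfolding W_def q_def using B by (simp add: card_PiE)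
  have pd: "p \<ge> \<delta>" unfolding p_def using Sbig n by (simp add: field_simps)
  have p0: "p \<ge> 0" unfolding p_def by simp
  have Xsum: "X w = (\<Sum>i\<in>B. ind w i)" for w
    unfolding X_def ind_def by (rule card_filter_real[OF B])
  have one: "(\<Sum>w\<in>W. ind w i) = q * p" if i: "i \<in> B" for i
  proof -
    have "(\<Sum>w\<in>W. ind w i) = real (card {w\<in>W. \<forall>l\<in>{i}. w l \<in> S})"
      unfolding ind_def using card_filter_real[OF finW, of "\<lambda>w. \<forall>l\<in>{i}. w l \<in> S"] by simp
    also have "\<dots> = q * p" unfolding W_def q_def p_def
      using count_PiE_J[OF B V SV _ n, of "{i}"] i by simp
    finally show ?thesis .
  qed
  have two: "(\<Sum>w\<in>W. ind w i * ind w j) = (if i = j then q * p else q * p^2)"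
    if i: "i \<in> B" and j: "j \<in> B" for i j
  proof -
    have "(\<Sum>w\<in>W. ind w i * ind w j) = real (card {w\<in>W. \<forall>l\<in>{i,j}. w l \<in> S})"
      unfolding ind_def card_filter_real[OF finW, of "\<lambda>w. \<forall>l\<in>{i,j}. w l \<in> S"]
      by (intro sum.cong) auto
    also have "\<dots> = q * p ^ card {i,j}" unfolding W_def q_def p_def
      using count_PiE_J[OF B V SV _ n, of "{i,j}"] i j by simp
    also have "\<dots> = (if i = j then q * p else q * p^2)" by (simp add: power2_eq_square)
    finally show ?thesis .
  qed
  have S1: "(\<Sum>w\<in>W. X w) = M * q * p"
  proof -
    have "(\<Sum>w\<in>W. X w) = (\<Sum>i\<in>B. \<Sum>w\<in>W. ind w i)" unfolding Xsum by (rule sum.swap)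
    also have "\<dots> = (\<Sum>i\<in>B. q * p)" using one by simp
    finally show ?thesis unfolding M_def by simp
  qed
  have S2: "(\<Sum>w\<in>W. X w ^ 2) = M * q * p + M * (M - 1) * q * p^2"
  proof -
    have "(\<Sum>w\<in>W. X w ^ 2) = (\<Sum>w\<in>W. (\<Sum>i\<in>B. ind w i) * (\<Sum>j\<in>B. ind w j))"
      unfolding Xsum power2_eq_square by (rule refl)
    also have "\<dots> = (\<Sum>w\<in>W. \<Sum>i\<in>B. \<Sum>j\<in>B. ind w i * ind w j)"
      by (rule sum.cong[OF refl]) (rule sum_product)
    also have "\<dots> = (\<Sum>i\<in>B. \<Sum>w\<in>W. \<Sum>j\<in>B. ind w i * ind w j)"
      by (rule sum.swap)
    also have "\<dots> = (\<Sum>i\<in>B. \<Sum>j\<in>B. \<Sum>w\<in>W. ind w i * ind w j)"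
      by (rule sum.cong[OF refl], rule sum.swap)
    also have "\<dots> = (\<Sum>i\<in>B. \<Sum>j\<in>B. if i = j then q * p else q * p^2)"
      by (intro sum.cong refl two)
    also have "\<dots> = (\<Sum>i\<in>B. q * p + (M - 1) * q * p^2)"
    proof (rule sum.cong[OF refl])
      fix i assume i: "i \<in> B"
      have Bi1: "B \<inter> {j. i = j} = {i}" using i by blast
      have Bi2: "B \<inter> - {j. i = j} = B - {i}" by blast
      have e1: "(\<Sum>j\<in>B. if i = j then q * p else q * p^2)
          = (\<Sum>j\<in>{i}. q * p) + (\<Sum>j\<in>B - {i}. q * p^2)"
        by (simp only: sum.If_cases[OF B] Bi1 Bi2)
      have cb1: "0 < card B" using i B by (auto simp: card_gt_0_iff)
      have cB1: "card (B - {i}) = card B - 1" using i B by simp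
      have rB: "real (card (B - {i})) = M - 1" unfolding M_def cB1 using cb1 by (simp add: of_nat_diff)
      have e2: "(\<Sum>j\<in>B - {i}. q * p^2) = real (card (B - {i})) * (q * p^2)" by (rule sum_constant)
      show "(\<Sum>j\<in>B. if i = j then q * p else q * p^2) = q * p + (M - 1) * q * p^2"
        unfolding e1 e2 rB by simp
    qed
    also have "\<dots> = M * q * p + M * (M - 1) * q * p^2"
      unfolding M_def by (simp add: algebra_simps)
    finally show ?thesis .
  qed
  have var: "(\<Sum>w\<in>W. (X w - M * p) ^ 2) \<le> M * q * p"
  proof -
    have "(\<Sum>w\<in>W. (X w - M * p) ^ 2) = (\<Sum>w\<in>W. X w ^ 2 - (2 * M * p) * X w + (M*p)^2)"
      by (rule sum.cong[OF refl]) (simp add: power2_eq_square algebra_simps)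
    also have "\<dots> = (\<Sum>w\<in>W. X w ^ 2) - (\<Sum>w\<in>W. (2 * M * p) * X w) + (\<Sum>w\<in>W. (M*p)^2)"
      by (simp only: sum.distrib sum_subtractf)
    also have "\<dots> = (\<Sum>w\<in>W. X w ^ 2) - 2 * M * p * (\<Sum>w\<in>W. X w) + (M*p)^2 * real (card W)"
      by (simp add: sum_distrib_left[symmetric])
    also have "\<dots> = M * q * p - M * q * p^2" unfolding S1 S2 cW by (simp add: power2_eq_square algebra_simps)
    also have "\<dots> \<le> M * q * p" using p0 unfolding M_def q_def by simp
    finally show ?thesis .
  qed
  define Bad where "Bad = {w\<in>W. X w < real k}"
  have M0: "M \<ge> 0" unfolding M_def by simp
  have "M * \<delta> \<le> M * p" by (rule mult_left_mono[OF pd M0])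
  then have Mp8: "M * p \<ge> 8" using M8 unfolding M_def by (simp add: mult.commute)
  have "\<delta> * M / 2 \<le> M * p / 2" using \<open>M * \<delta> \<le> M * p\<close> by (simp add: mult.commute)
  then have kMp: "real k \<le> M * p / 2" using kle unfolding M_def by linarith
  have "real (card Bad) * (M * p / 2) ^ 2 = (\<Sum>w\<in>Bad. (M * p / 2) ^ 2)" by simp
  also have "\<dots> \<le> (\<Sum>w\<in>Bad. (X w - M * p) ^ 2)"
  proof (rule sum_mono)
    fix w assume "w \<in> Bad"
    then have "X w < real k" unfolding Bad_def by simp
    moreover have "X w \<ge> 0" unfolding X_def by simp
    ultimately have a: "M * p / 2 \<le> M * p - X w" and b: "0 \<le> M * p / 2" using kMp Mp8 by linarith+
    have "(M * p / 2) ^ 2 \<le> (M * p - X w) ^ 2" by (rule power_mono[OF a b])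
    then show "(M * p / 2) ^ 2 \<le> (X w - M * p) ^ 2" by (simp add: power2_commute)
  qed
  also have "\<dots> \<le> (\<Sum>w\<in>W. (X w - M * p) ^ 2)"
    by (rule sum_mono2[OF finW]) (auto simp: Bad_def)
  also have "\<dots> \<le> M * q * p" by (rule var)
  finally have bb: "real (card Bad) * (M * p / 2) ^ 2 \<le> M * q * p" .
  have q0: "q \<ge> 0" unfolding q_def by simp
  have c4: "real (card Bad) * (M * p) \<le> 4 * q"
  proof -
    have "(real (card Bad) * (M * p)) * (M * p) \<le> (4 * q) * (M * p)"
      using bb by (simp add: power2_eq_square field_simps)
    then show ?thesis using Mp8 by (simp add: mult_le_cancel_right)
  qed
  have "real (card Bad) * 8 \<le> real (card Bad) * (M * p)"
    by (rule mult_left_mono[OF Mp8]) simp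
  then have cBad: "real (card Bad) \<le> q / 2" using c4 by linarith
  have BW: "Bad \<subseteq> W" unfolding Bad_def by blast
  have "{w \<in> W. k \<le> card {i\<in>B. w i \<in> S}} = W - Bad"
  proof -
    have "\<And>w. (k \<le> card {i\<in>B. w i \<in> S}) = (\<not> X w < real k)" unfolding X_def by (simp add: not_less)
    then show ?thesis unfolding Bad_def by blast
  qed
  moreover have "card (W - Bad) = card W - card Bad" by (rule card_Diff_subset[OF finite_subset[OF BW finW] BW])
  moreover have "card Bad \<le> card W" by (rule card_mono[OF finW BW])
  ultimately have "real (card {w \<in> W. k \<le> card {i\<in>B. w i \<in> S}}) = q - real (card Bad)"
    using cW by (simp add: of_nat_diff)
  then show ?thesis using cBad unfolding W_def q_def by simp
qed

lemma trig_fin: "is_trigraph T \<Longrightarrow> finite (verts T)"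
  unfolding is_trigraph_def by blast

lemma red_not_single: "is_trigraph T \<Longrightarrow> {y} \<notin> red T"
proof
  assume T: "is_trigraph T" and r: "{y} \<in> red T"
  then obtain u v where e: "{y} = {u, v}" and ne: "u \<noteq> v" unfolding is_trigraph_def by blast
  have "u \<in> {y}" "v \<in> {y}" by (simp_all add: e)
  then show False using ne by simp
qed

lemma cnbr_sym:
  assumes "x \<in> verts T" "y \<in> verts T"
  shows "(y \<in> cnbr T x) = (x \<in> cnbr T y)"
  using assms unfolding cnbr_def nbr_def by (auto simp: insert_commute)

lemma rnbr_sym:
  assumes "x \<in> verts T" "y \<in> verts T"
  shows "(y \<in> rnbr T x) = (x \<in> rnbr T y)"
  using assms unfolding rnbr_def by (auto simp: insert_commute)

lemma cnbr_not_rnbr: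
  assumes T: "is_trigraph T" and "x \<in> cnbr T y"
  shows "x \<notin> rnbr T y"
proof
  assume r: "x \<in> rnbr T y"
  then have xr: "{x, y} \<in> red T" unfolding rnbr_def by blast
  show False
  proof (cases "x = y")
    case True
    then show False using xr red_not_single[OF T, of y] by simp
  next
    case False
    then have "{x, y} \<in> plain T" using assms(2) unfolding cnbr_def nbr_def by blast
    then show False using xr T unfolding is_trigraph_def by blast
  qed
qed

lemma cnbr_sub: "y \<in> verts T \<Longrightarrow> cnbr T y \<subseteq> verts T"
  unfolding cnbr_def nbr_def by blast

lemma nbr_sub_cnbr: "nbr T y \<subseteq> cnbr T y"
  unfolding cnbr_def by blast

definition Tr :: "nat trigraph \<Rightarrow> (nat \<Rightarrow> nat) \<Rightarrow> nat set \<Rightarrow> nat set set" where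
  "Tr T z D = {K. \<exists>y\<in>verts T. (\<forall>i\<in>D. z i \<notin> rnbr T y) \<and> K = {i\<in>D. z i \<in> cnbr T y}}"

lemma shat_card:
  assumes T: "is_trigraph T" and zV: "\<forall>i\<in>D. z i \<in> verts T" and PD: "P \<subseteq> D"
    and sh: "shat (Tr T z D) P" and vc: "vc_dim_le T d" and finD: "finite D"
  shows "card P \<le> d"
proof -
  let ?V = "verts T"
  have wit: "\<exists>y\<in>?V. (\<forall>i\<in>D. z i \<notin> rnbr T y) \<and> {i\<in>D. z i \<in> cnbr T y} \<inter> P = Q"
    if "Q \<subseteq> P" for Q
  proof -
    have "\<forall>Q\<subseteq>P. \<exists>K\<in>Tr T z D. K \<inter> P = Q" using sh by (simp only: shat_def)
    then have "\<exists>K\<in>Tr T z D. K \<inter> P = Q" using that by simp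
    then obtain K where K1: "K \<in> Tr T z D" and K2: "K \<inter> P = Q" by (rule bexE)
    from K1 have "\<exists>y\<in>verts T. (\<forall>i\<in>D. z i \<notin> rnbr T y) \<and> K = {i\<in>D. z i \<in> cnbr T y}"
      unfolding Tr_def by (rule CollectD)
    then obtain y where y1: "y \<in> verts T" and y2: "(\<forall>i\<in>D. z i \<notin> rnbr T y) \<and> K = {i\<in>D. z i \<in> cnbr T y}"
      by (rule bexE)
    have "{i\<in>D. z i \<in> cnbr T y} \<inter> P = Q" using K2 y2 by simp
    then show ?thesis using y1 y2 by blast
  qed
  have inj: "inj_on z P"
  proof (rule inj_onI, rule ccontr)
    fix i j assume i: "i \<in> P" and j: "j \<in> P" and e: "z i = z j" and ne: "i \<noteq> j"
    have iP: "{i} \<subseteq> P" using i by simp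
    obtain y where y1: "y \<in> ?V" and y2: "(\<forall>i\<in>D. z i \<notin> rnbr T y) \<and> {l\<in>D. z l \<in> cnbr T y} \<inter> P = {i}"
      using wit[OF iP] by (rule bexE)
    have y3: "{l\<in>D. z l \<in> cnbr T y} \<inter> P = {i}" using y2 by (rule conjunct2)
    have "i \<in> {l\<in>D. z l \<in> cnbr T y} \<inter> P" unfolding y3 by simp
    then have zi: "z i \<in> cnbr T y" by simp
    have "j \<notin> {l\<in>D. z l \<in> cnbr T y} \<inter> P" unfolding y3 using ne by simp
    then have "z j \<notin> cnbr T y" using j subsetD[OF PD j] by simp
    then show False using e zi by simp
  qed
  define X where "X = z ` P"
  have finP: "finite P" using finite_subset[OF PD finD] .
  have finX: "finite X" unfolding X_def using finP by simp
  have cX: "card X = card P" unfolding X_def using card_image[OF inj] .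
  have XV: "X \<subseteq> ?V" unfolding X_def using zV PD by auto
  define R where "R = (\<lambda>Y y. y\<in>?V \<and> (\<forall>i\<in>D. z i \<notin> rnbr T y) \<and> {i\<in>D. z i \<in> cnbr T y} \<inter> P = {i\<in>P. z i \<in> Y})"
  define f where "f = (\<lambda>Y. SOME y. R Y y)"
  have fprop: "R Y (f Y)" for Y
  proof -
    have sub: "{i\<in>P. z i \<in> Y} \<subseteq> P" by simp
    have "\<exists>y. R Y y" unfolding R_def using wit[OF sub] by blast
    then show ?thesis unfolding f_def by (rule someI_ex)
  qed
  have fV: "f Y \<in> ?V" for Y using fprop[of Y] unfolding R_def by simp
  have fR: "\<forall>i\<in>D. z i \<notin> rnbr T (f Y)" for Y using fprop[of Y] unfolding R_def by simp
  have fE: "{i\<in>D. z i \<in> cnbr T (f Y)} \<inter> P = {i\<in>P. z i \<in> Y}" for Y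
    using fprop[of Y] unfolding R_def by simp
  have key: "z i \<in> cnbr T (f Y) \<longleftrightarrow> z i \<in> Y" if i: "i \<in> P" for i Y
  proof -
    have iD: "i \<in> D" using subsetD[OF PD i] .
    have "z i \<in> cnbr T (f Y) \<longleftrightarrow> i \<in> {i\<in>D. z i \<in> cnbr T (f Y)} \<inter> P" using i iD by simp
    also have "\<dots> \<longleftrightarrow> i \<in> {i\<in>P. z i \<in> Y}" unfolding fE by (rule refl)
    also have "\<dots> \<longleftrightarrow> z i \<in> Y" using i by simp
    finally show ?thesis .
  qed
  have fc: "cnbr T (f Y) \<inter> X = Y" if Y: "Y \<subseteq> X" for Y
  proof (intro equalityI subsetI)
    fix x assume x: "x \<in> cnbr T (f Y) \<inter> X"
    then have "x \<in> z ` P" unfolding X_def by simp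
    then obtain i where xi: "x = z i" and i: "i \<in> P" by (rule imageE)
    then show "x \<in> Y" using key[OF i, of Y] x by simp
  next
    fix x assume x: "x \<in> Y"
    then have xX: "x \<in> z ` P" using Y unfolding X_def by (rule subsetD[rotated])
    then obtain i where xi: "x = z i" and i: "i \<in> P" by (rule imageE)
    then show "x \<in> cnbr T (f Y) \<inter> X" using key[OF i, of Y] x xX unfolding X_def by simp
  qed
  have fr: "rnbr T (f Y) \<inter> X = {}" for Y
  proof -
    have "\<forall>i\<in>P. z i \<notin> rnbr T (f Y)" using fR[of Y] PD by auto
    then show ?thesis unfolding X_def by auto
  qed
  define S where "S = f ` Pow X"
  have injf: "inj_on f (Pow X)"
  proof (rule inj_onI)
    fix Y Y' assume a: "Y \<in> Pow X" "Y' \<in> Pow X" "f Y = f Y'"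
    have "Y = cnbr T (f Y) \<inter> X" using fc a(1) by simp
    also have "\<dots> = cnbr T (f Y') \<inter> X" using a(3) by simp
    also have "\<dots> = Y'" using fc a(2) by simp
    finally show "Y = Y'" .
  qed
  have cS: "card S = 2 ^ card X" unfolding S_def card_image[OF injf] using card_Pow[OF finX] by simp
  have SV: "S \<subseteq> ?V" unfolding S_def using fV by auto
  have Sr: "\<forall>v\<in>S. rnbr T v \<inter> X = {}" unfolding S_def using fr by auto
  have Sc: "\<forall>Y\<subseteq>X. \<exists>v\<in>S. cnbr T v \<inter> X = Y"
  proof (intro allI impI)
    fix Y assume "Y \<subseteq> X"
    then have "f Y \<in> S" "cnbr T (f Y) \<inter> X = Y" unfolding S_def using fc by auto
    then show "\<exists>v\<in>S. cnbr T v \<inter> X = Y" by (rule bexI[rotated])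
  qed
  have "shattered T X" unfolding shattered_def using XV SV cS Sr Sc by blast
  then have "card X \<le> d" using vc unfolding vc_dim_le_def by blast
  then show ?thesis using cX by simp
qed

lemma Tr_card:
  assumes T: "is_trigraph T" and zV: "\<forall>i\<in>D. z i \<in> verts T" and vc: "vc_dim_le T d" and finD: "finite D"
  shows "card (Tr T z D) \<le> (\<Sum>i\<le>d. card D choose i)"
proof -
  have sub: "Tr T z D \<subseteq> Pow D" unfolding Tr_def by blast
  have "card (Tr T z D) \<le> card {P. P \<subseteq> D \<and> shat (Tr T z D) P}" by (rule pajor[OF finD sub])
  also have "\<dots> \<le> card {P. P \<subseteq> D \<and> card P \<le> d}"
  proof (rule card_mono)
    show "finite {P. P \<subseteq> D \<and> card P \<le> d}" using finD by simp
    show "{P. P \<subseteq> D \<and> shat (Tr T z D) P} \<subseteq> {P. P \<subseteq> D \<and> card P \<le> d}"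
    proof
      fix P assume "P \<in> {P. P \<subseteq> D \<and> shat (Tr T z D) P}"
      then have "P \<subseteq> D" "shat (Tr T z D) P" by auto
      then show "P \<in> {P. P \<subseteq> D \<and> card P \<le> d}" using shat_card[OF T zV _ _ vc finD] by blast
    qed
  qed
  also have "\<dots> \<le> (\<Sum>i\<le>d. card D choose i)" by (rule card_small_subsets[OF finD])
  finally show ?thesis .
qed

lemma card_filter_nat:
  assumes "finite A"
  shows "card {x\<in>A. P x} = (\<Sum>x\<in>A. if P x then 1 else (0::nat))"
proof -
  have "card {x\<in>A. P x} = (\<Sum>x\<in>{x\<in>A. P x}. (1::nat))" by simp
  also have "\<dots> = (\<Sum>x\<in>A. if P x then 1 else 0)" using sum.inter_filter[OF assms, of "\<lambda>_. (1::nat)" P] by simp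
  finally show ?thesis .
qed

lemma main_count:
  fixes T :: "nat trigraph"
  assumes T: "is_trigraph T" and n0: "0 < card (verts T)" and dpos: "0 < \<delta>"
    and mindeg: "min_degree_ge T (\<delta> * real (card (verts T)))"
    and vc: "vc_dim_le T d"
    and M8: "\<delta> * real M \<ge> 8" and kle: "real k \<le> \<delta> * real M / 2"
    and ratio: "2 * ((m + M) choose (m + k)) * (\<Sum>i\<le>d. (m + k) choose i) < (m + M) choose m"
  shows "\<exists>X. dominating T X \<and> card X \<le> m"
proof (rule ccontr)
  assume nd: "\<not> (\<exists>X. dominating T X \<and> card X \<le> m)"
  define V where "V = verts T"
  define n where "n = card V"
  define N where "N = m + M"
  define Pos where "Pos = {0..<N}"
  define Z where "Z = PiE Pos (\<lambda>_. V)"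
  define Am where "Am = {A. A \<subseteq> Pos \<and> card A = m}"
  define Phi where "Phi = (\<Sum>i\<le>d. (m + k) choose i)"
  define bad where "bad = (\<lambda>z A. \<exists>y\<in>V. (\<forall>i\<in>A. y \<notin> cnbr T (z i) \<union> rnbr T (z i))
                        \<and> k \<le> card {i\<in>Pos - A. z i \<in> cnbr T y})"
  have finV: "finite V" unfolding V_def using trig_fin[OF T] .
  have n0': "0 < n" unfolding n_def V_def using n0 .
  have finPos: "finite Pos" unfolding Pos_def by simp
  have cPos: "card Pos = N" unfolding Pos_def by simp
  have finZ: "finite Z" unfolding Z_def using finPos finV by (simp add: finite_PiE)
  have cZ: "card Z = n ^ N" unfolding Z_def n_def using card_funcsetE[OF finPos, of V] cPos by simp
  have finAm: "finite Am" unfolding Am_def using finPos by simp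
  have cAm: "card Am = N choose m" unfolding Am_def using n_subsets[OF finPos] cPos by simp
  have LB: "real (card {z\<in>Z. bad z A}) \<ge> real n ^ N / 2" if A: "A \<in> Am" for A
  proof -
    have AP: "A \<subseteq> Pos" and cA: "card A = m" using A unfolding Am_def by auto
    have finA: "finite A" using finite_subset[OF AP finPos] .
    define B where "B = Pos - A"
    have finB: "finite B" unfolding B_def using finPos by simp
    have cB: "card B = M" unfolding B_def using card_Diff_subset[OF finA AP] cPos cA N_def by simp
    define U where "U = PiE A (\<lambda>_. V)"
    define Wb where "Wb = PiE B (\<lambda>_. V)"
    have finU: "finite U" unfolding U_def using finA finV by (simp add: finite_PiE)
    have cU: "card U = n ^ m" unfolding U_def n_def using card_funcsetE[OF finA, of V] cA by simp
    have ex: "\<exists>y. y \<in> V \<and> (\<forall>x\<in>u ` A. y \<notin> cnbr T x \<union> rnbr T x)" if u: "u \<in> U" for u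
    proof -
      have uV: "u ` A \<subseteq> V" using u unfolding U_def by (auto simp: PiE_iff)
      have "card (u ` A) \<le> m" using card_image_le[OF finA, of u] cA by simp
      then have "\<not> dominating T (u ` A)" using nd by blast
      then have "\<not> (\<forall>y\<in>V. \<exists>x\<in>u ` A. y \<in> cnbr T x \<union> rnbr T x)"
        using uV unfolding dominating_def V_def by blast
      then show ?thesis by blast
    qed
    define yof where "yof = (\<lambda>u. SOME y. y \<in> V \<and> (\<forall>x\<in>u ` A. y \<notin> cnbr T x \<union> rnbr T x))"
    have yof: "yof u \<in> V \<and> (\<forall>x\<in>u ` A. yof u \<notin> cnbr T x \<union> rnbr T x)" if "u \<in> U" for u
      unfolding yof_def by (rule someI_ex[OF ex[OF that]])
    define Good where "Good = (\<lambda>u. {w\<in>Wb. k \<le> card {i\<in>B. w i \<in> cnbr T (yof u)}})"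
    have cGood: "real (card (Good u)) \<ge> real n ^ M / 2" if u: "u \<in> U" for u
    proof -
      have yV: "yof u \<in> V" using yof[OF u] by simp
      have SV: "cnbr T (yof u) \<subseteq> V" using cnbr_sub[of "yof u" T] yV unfolding V_def by simp
      have "\<delta> * real n \<le> real (card (nbr T (yof u)))"
        using mindeg yV unfolding min_degree_ge_def n_def V_def by blast
      also have "\<dots> \<le> real (card (cnbr T (yof u)))"
        using card_mono[OF finite_subset[OF SV finV] nbr_sub_cnbr] by simp
      finally have Sbig: "real (card (cnbr T (yof u))) \<ge> \<delta> * real (card V)" unfolding n_def .
      have "real (card {w \<in> PiE B (\<lambda>_. V). k \<le> card {i\<in>B. w i \<in> cnbr T (yof u)}}) \<ge> real (card V) ^ card B / 2"
        by (rule cheb_count[OF finB finV SV _ dpos Sbig]) (use n0' M8 kle cB n_def in auto)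
      then show ?thesis unfolding Good_def Wb_def cB n_def .
    qed
    define mrg where "mrg = (\<lambda>(u::nat\<Rightarrow>nat, w::nat\<Rightarrow>nat). (\<lambda>i. if i \<in> A then u i else w i))"
    define SG where "SG = Sigma U Good"
    have finSG: "finite SG" unfolding SG_def Good_def Wb_def using finU finB finV
      by (intro finite_SigmaI) (auto simp: finite_PiE)
    have cSG: "card SG = (\<Sum>u\<in>U. card (Good u))" unfolding SG_def
      by (rule card_SigmaI[OF finU]) (auto simp: Good_def Wb_def finB finV finite_PiE)
    have injm: "inj_on mrg SG"
    proof (rule inj_onI)
      fix p1 p2 assume p1: "p1 \<in> SG" and p2: "p2 \<in> SG" and e: "mrg p1 = mrg p2"
      obtain u1 w1 where q1: "p1 = (u1, w1)" by (cases p1)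
      obtain u2 w2 where q2: "p2 = (u2, w2)" by (cases p2)
      have u1: "u1 \<in> extensional A" "w1 \<in> extensional B" using p1 q1 unfolding SG_def U_def Good_def Wb_def
        by (auto simp: PiE_iff)
      have u2: "u2 \<in> extensional A" "w2 \<in> extensional B" using p2 q2 unfolding SG_def U_def Good_def Wb_def
        by (auto simp: PiE_iff)
      have e': "\<And>i. (if i \<in> A then u1 i else w1 i) = (if i \<in> A then u2 i else w2 i)"
        using e unfolding q1 q2 mrg_def by (simp add: fun_eq_iff)
      have "u1 = u2"
      proof (rule extensionalityI[OF u1(1) u2(1)])
        fix i assume "i \<in> A" then show "u1 i = u2 i" using e'[of i] by simp
      qed
      moreover have "w1 = w2"
      proof (rule extensionalityI[OF u1(2) u2(2)])
        fix i assume "i \<in> B" then have "i \<notin> A" unfolding B_def by simp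
        then show "w1 i = w2 i" using e'[of i] by simp
      qed
      ultimately show "p1 = p2" using q1 q2 by simp
    qed
    have msub: "mrg ` SG \<subseteq> {z\<in>Z. bad z A}"
    proof
      fix z assume "z \<in> mrg ` SG"
      then obtain p where p: "p \<in> SG" and zp: "z = mrg p" by blast
      obtain u w where q: "p = (u, w)" by (cases p)
      have u: "u \<in> U" and w: "w \<in> Good u" using p q unfolding SG_def by auto
      have uA: "\<forall>i\<in>A. u i \<in> V" "u \<in> extensional A" using u unfolding U_def by (auto simp: PiE_iff)
      have wB: "w \<in> Wb" and wk: "k \<le> card {i\<in>B. w i \<in> cnbr T (yof u)}" using w unfolding Good_def by auto
      have wB': "\<forall>i\<in>B. w i \<in> V" "w \<in> extensional B" using wB unfolding Wb_def by (auto simp: PiE_iff)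
      have zdef: "z = (\<lambda>i. if i \<in> A then u i else w i)" using zp q unfolding mrg_def by simp
      have "z \<in> Z" unfolding Z_def PiE_iff
      proof
        show "\<forall>i\<in>Pos. z i \<in> V"
        proof
          fix i assume i: "i \<in> Pos"
          show "z i \<in> V"
          proof (cases "i \<in> A")
            case True then show ?thesis using uA zdef by simp
          next
            case False then have "i \<in> B" unfolding B_def using i by simp
            then show ?thesis using wB' zdef False by simp
          qed
        qed
        show "z \<in> extensional Pos" unfolding extensional_def
        proof (intro CollectI allI impI)
          fix i assume i: "i \<notin> Pos"
          then have "i \<notin> A" "i \<notin> B" using AP unfolding B_def by auto
          then show "z i = undefined" using zdef uA(2) wB'(2) unfolding extensional_def by simp
        qed
      qed
      moreover have "bad z A" unfolding bad_def
      proof (rule bexI[of _ "yof u"], rule conjI)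
        show "yof u \<in> V" using yof[OF u] by simp
        show "\<forall>i\<in>A. yof u \<notin> cnbr T (z i) \<union> rnbr T (z i)"
        proof
          fix i assume i: "i \<in> A"
          then have "z i = u i" "u i \<in> u ` A" using zdef by auto
          then show "yof u \<notin> cnbr T (z i) \<union> rnbr T (z i)" using yof[OF u] i by simp
        qed
        have "{i\<in>Pos - A. z i \<in> cnbr T (yof u)} = {i\<in>B. w i \<in> cnbr T (yof u)}"
          unfolding B_def using zdef by auto
        then show "k \<le> card {i\<in>Pos - A. z i \<in> cnbr T (yof u)}" using wk by simp
      qed
      ultimately show "z \<in> {z\<in>Z. bad z A}" by simp
    qed
    have "real n ^ N / 2 = real (card U) * (real n ^ M / 2)"
      unfolding cU N_def by (simp add: power_add)
    also have "\<dots> = (\<Sum>u\<in>U. real n ^ M / 2)" by simp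
    also have "\<dots> \<le> (\<Sum>u\<in>U. real (card (Good u)))" by (rule sum_mono) (rule cGood)
    also have "\<dots> = real (card SG)" unfolding cSG by simp
    also have "\<dots> = real (card (mrg ` SG))" using card_image[OF injm] by simp
    also have "\<dots> \<le> real (card {z\<in>Z. bad z A})"
      using card_mono[OF _ msub] finZ by simp
    finally show ?thesis .
  qed
  have UB: "card {A\<in>Am. bad z A} \<le> (N choose (m + k)) * Phi" if z: "z \<in> Z" for z
  proof -
    have zV: "\<forall>i\<in>Pos. z i \<in> V" using z unfolding Z_def by (auto simp: PiE_iff)
    define Dset where "Dset = {D. D \<subseteq> Pos \<and> card D = m + k}"
    have finD: "finite Dset" unfolding Dset_def using finPos by simp
    have cD: "card Dset = N choose (m + k)" unfolding Dset_def using n_subsets[OF finPos] cPos by simp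
    have sub: "{A\<in>Am. bad z A} \<subseteq> (\<Union>D\<in>Dset. (\<lambda>K. D - K) ` Tr T z D)"
    proof
      fix A assume "A \<in> {A\<in>Am. bad z A}"
      then have A: "A \<in> Am" and bA: "bad z A" by auto
      have AP: "A \<subseteq> Pos" and cA: "card A = m" using A unfolding Am_def by auto
      have finA: "finite A" using finite_subset[OF AP finPos] .
      obtain y where yV: "y \<in> V" and hA: "\<forall>i\<in>A. y \<notin> cnbr T (z i) \<union> rnbr T (z i)"
        and hk: "k \<le> card {i\<in>Pos - A. z i \<in> cnbr T y}"
        using bA unfolding bad_def by blast
      obtain K where KO: "K \<subseteq> {i\<in>Pos - A. z i \<in> cnbr T y}" and cK: "card K = k" and finK: "finite K"
        using obtain_subset_with_card_n[OF hk] by blast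
      have KP: "K \<subseteq> Pos" and KA: "A \<inter> K = {}" and Kc: "\<forall>i\<in>K. z i \<in> cnbr T y" using KO by auto
      define D where "D = A \<union> K"
      have DP: "D \<subseteq> Pos" unfolding D_def using AP KP by simp
      have cDD: "card D = m + k" unfolding D_def using card_Un_disjoint[OF finA finK KA] cA cK by simp
      have Aprop: "z i \<notin> cnbr T y \<and> z i \<notin> rnbr T y" if i: "i \<in> A" for i
      proof -
        have ziV: "z i \<in> V" using zV AP i by auto
        have "y \<notin> cnbr T (z i)" "y \<notin> rnbr T (z i)" using hA i by auto
        then show ?thesis using cnbr_sym[of "z i" T y] rnbr_sym[of "z i" T y] ziV yV unfolding V_def by simp
      qed
      have Dr: "\<forall>i\<in>D. z i \<notin> rnbr T y"
      proof
        fix i assume "i \<in> D"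
        then consider "i \<in> A" | "i \<in> K" unfolding D_def by blast
        then show "z i \<notin> rnbr T y"
        proof cases
          case 1 then show ?thesis using Aprop by simp
        next
          case 2 then show ?thesis using Kc cnbr_not_rnbr[OF T] by blast
        qed
      qed
      have Keq: "K = {i\<in>D. z i \<in> cnbr T y}"
      proof (intro equalityI subsetI)
        fix i assume "i \<in> K" then show "i \<in> {i\<in>D. z i \<in> cnbr T y}" using Kc unfolding D_def by simp
      next
        fix i assume i: "i \<in> {i\<in>D. z i \<in> cnbr T y}"
        then have "i \<in> A \<or> i \<in> K" "z i \<in> cnbr T y" unfolding D_def by auto
        then show "i \<in> K" using Aprop by auto
      qed
      have KT: "K \<in> Tr T z D" unfolding Tr_def using yV Dr Keq unfolding V_def by blast
      have "D - K = A" unfolding D_def using KA by auto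
      then have "A \<in> (\<lambda>K. D - K) ` Tr T z D" using KT by (intro image_eqI[of _ _ K]) auto
      moreover have "D \<in> Dset" unfolding Dset_def using DP cDD by simp
      ultimately show "A \<in> (\<Union>D\<in>Dset. (\<lambda>K. D - K) ` Tr T z D)" by blast
    qed
    have finTr: "finite (Tr T z D)" if "D \<in> Dset" for D
    proof -
      have "finite D" using that finite_subset[OF _ finPos] unfolding Dset_def by blast
      then show ?thesis using finite_subset[of "Tr T z D" "Pow D"] unfolding Tr_def by auto
    qed
    have "card {A\<in>Am. bad z A} \<le> card (\<Union>D\<in>Dset. (\<lambda>K. D - K) ` Tr T z D)"
      by (rule card_mono[OF _ sub]) (use finD finTr in auto)
    also have "\<dots> \<le> (\<Sum>D\<in>Dset. card ((\<lambda>K. D - K) ` Tr T z D))" by (rule card_UN_le[OF finD])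
    also have "\<dots> \<le> (\<Sum>D\<in>Dset. card (Tr T z D))" by (rule sum_mono) (rule card_image_le, rule finTr)
    also have "\<dots> \<le> (\<Sum>D\<in>Dset. Phi)"
    proof (rule sum_mono)
      fix D assume D: "D \<in> Dset"
      have DP: "D \<subseteq> Pos" and cDD: "card D = m + k" using D unfolding Dset_def by auto
      have "card (Tr T z D) \<le> (\<Sum>i\<le>d. card D choose i)"
        by (rule Tr_card[OF T _ vc finite_subset[OF DP finPos]]) (use zV DP V_def in auto)
      then show "card (Tr T z D) \<le> Phi" unfolding Phi_def cDD .
    qed
    also have "\<dots> = (N choose (m + k)) * Phi" using cD by simp
    finally show ?thesis .
  qed
  have DC: "(\<Sum>A\<in>Am. card {z\<in>Z. bad z A}) = (\<Sum>z\<in>Z. card {A\<in>Am. bad z A})"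
  proof -
    have "(\<Sum>A\<in>Am. card {z\<in>Z. bad z A}) = (\<Sum>A\<in>Am. \<Sum>z\<in>Z. if bad z A then 1 else (0::nat))"
      by (rule sum.cong[OF refl]) (rule card_filter_nat[OF finZ])
    also have "\<dots> = (\<Sum>z\<in>Z. \<Sum>A\<in>Am. if bad z A then 1 else (0::nat))" by (rule sum.swap)
    also have "\<dots> = (\<Sum>z\<in>Z. card {A\<in>Am. bad z A})"
      by (rule sum.cong[OF refl]) (rule card_filter_nat[OF finAm, symmetric])
    finally show ?thesis .
  qed
  have "real (N choose m) * (real n ^ N / 2) = (\<Sum>A\<in>Am. real n ^ N / 2)" using cAm by simp
  also have "\<dots> \<le> (\<Sum>A\<in>Am. real (card {z\<in>Z. bad z A}))" by (rule sum_mono) (rule LB)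
  also have "\<dots> = real (\<Sum>z\<in>Z. card {A\<in>Am. bad z A})" unfolding DC[symmetric] by simp
  also have "\<dots> \<le> real (\<Sum>z\<in>Z. (N choose (m + k)) * Phi)"
    by (subst of_nat_le_iff) (rule sum_mono, rule UB)
  also have "\<dots> = real n ^ N * real ((N choose (m + k)) * Phi)" using cZ by simp
  finally have "real (N choose m) * (real n ^ N / 2) \<le> real n ^ N * real ((N choose (m + k)) * Phi)" .
  moreover have "real n ^ N > 0" using n0' by simp
  ultimately have "real (N choose m) \<le> 2 * real ((N choose (m + k)) * Phi)"
    by (simp add: field_simps)
  then have "N choose m \<le> 2 * (N choose (m + k)) * Phi" by linarith
  then show False using ratio unfolding N_def Phi_def by simp
qed

lemma pow_50: "9 \<le> a \<Longrightarrow> 50 * a \<le> (2::nat) ^ a"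
proof (induction a rule: dec_induct)
  case base then show ?case by simp
next
  case (step a) then show ?case by simp
qed

lemma ln2_half: "ln (2::real) \<ge> 1/2"
proof -
  have e: "exp (1/2::real) * exp (1/2) = exp 1" by (simp add: exp_add[symmetric])
  have "exp (1/2::real) < 2"
  proof (rule ccontr)
    assume "\<not> exp (1/2::real) < 2"
    then have "2 \<le> exp (1/2::real)" by simp
    then have "2 * 2 \<le> exp (1/2::real) * exp (1/2)" by (intro mult_mono) auto
    then show False using e exp_le by simp
  qed
  then have "ln (exp (1/2::real)) < ln 2" by (subst ln_less_cancel_iff) auto
  then show ?thesis by simp
qed

lemma params:
  fixes \<delta> :: real and d :: nat
  assumes dp: "0 < \<delta>" and d1: "\<delta> \<le> 1" and dd: "1 \<le> d"
  obtains m M k :: nat where "\<delta> * real M \<ge> 8" "real k \<le> \<delta> * real M / 2"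
    "2 * ((m + M) choose (m + k)) * (\<Sum>i\<le>d. (m + k) choose i) < (m + M) choose m"
    "real m \<le> 216 * (real d / \<delta>) * ln (2 / \<delta>)"
proof -
  define u where "u = ln (2 / \<delta>)"
  have u2: "exp u = 2 / \<delta>" unfolding u_def using dp by simp
  have "ln 2 \<le> u" unfolding u_def using dp d1 by (subst ln_le_cancel_iff) (auto simp: field_simps)
  then have uh: "u \<ge> 1/2" using ln2_half by simp
  define a where "a = max 9 (nat \<lceil>2 * u\<rceil>)"
  have a9: "9 \<le> a" unfolding a_def by simp
  have a2u: "real a \<ge> 2 * u" unfolding a_def by linarith
  have a18: "real a \<le> 18 * u"
  proof -
    have "real (nat \<lceil>2 * u\<rceil>) \<le> 2 * u + 1" using uh by linarith
    then show ?thesis unfolding a_def using uh by (simp add: max_def) linarith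
  qed
  have p50: "real (2 ^ a) \<ge> 50 * real a" using pow_50[OF a9] by (simp only: of_nat_le_iff[symmetric]) (simp?)
  have pd: "(2::real) ^ a \<ge> 2 / \<delta>"
  proof -
    have "ln ((2::real) ^ a) = real a * ln 2" by (simp add: ln_realpow)
    also have "\<dots> \<ge> 2 * u * ln 2" using a2u by (intro mult_right_mono) auto
    finally have l1: "ln ((2::real) ^ a) \<ge> 2 * u * ln 2" .
    have "u * 1 \<le> u * (2 * ln 2)" using ln2_half uh by (intro mult_left_mono) auto
    then have "ln ((2::real) ^ a) \<ge> u" using l1 by (simp add: mult.assoc mult.commute mult.left_commute)
    then have "exp u \<le> exp (ln ((2::real) ^ a))" by (subst exp_le_cancel_iff)
    also have "exp (ln ((2::real) ^ a)) = 2 ^ a" by (rule exp_ln) simp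
    finally show ?thesis using u2 by simp
  qed
  define k where "k = 2 * d * a"
  define M where "M = nat \<lceil>2 * real k / \<delta>\<rceil>"
  define m where "m = 2 * M"
  have k1: "k \<ge> 1" unfolding k_def using dd a9 by simp
  have kd: "d \<le> k" unfolding k_def using a9 by simp
  have M1: "real M \<ge> 2 * real k / \<delta>" unfolding M_def by linarith
  have M2: "real M \<le> 2 * real k / \<delta> + 1" unfolding M_def
  proof -
    have "0 \<le> 2 * real k / \<delta>" using dp by simp
    then show "real (nat \<lceil>2 * real k / \<delta>\<rceil>) \<le> 2 * real k / \<delta> + 1" by linarith
  qed
  have dM: "\<delta> * real M \<ge> 2 * real k" using M1 dp by (simp add: field_simps)
  have kk: "real k \<le> real k / \<delta>" using dp d1 by (simp add: field_simps) (simp add: mult_left_le_one_le)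
  have kM: "k \<le> M"
  proof -
    have e2: "2 * real k / \<delta> = 2 * (real k / \<delta>)" by simp
    have "real k / \<delta> \<ge> 0" using dp by simp
    then have "2 * real k / \<delta> \<ge> real k" using kk e2 by linarith
    then show ?thesis using M1 by linarith
  qed
  have da: "9 \<le> real d * real a"
  proof -
    have "(1::real) * 9 \<le> real d * real a" by (rule mult_mono) (use dd a9 in auto)
    then show ?thesis by simp
  qed
  have c1: "\<delta> * real M \<ge> 8" using dM da unfolding k_def by simp
  have c2: "real k \<le> \<delta> * real M / 2" using dM by simp
  define L where "L = m + k"
  define Phi where "Phi = (\<Sum>i\<le>d. L choose i)"
  have dL: "d \<le> L" unfolding L_def using kd by simp
  have Phi1: "real Phi \<le> (exp 1 * real L / real d) ^ d" unfolding Phi_def by (rule sauer_numeric[OF dd dL])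
  have L7: "real L \<le> 7 * real k / \<delta>"
  proof -
    have q: "2 * real k / \<delta> = 2 * (real k / \<delta>)" "7 * real k / \<delta> = 7 * (real k / \<delta>)" by simp_all
    have rL: "real L = 2 * real M + real k" unfolding L_def m_def by simp
    have "real k \<ge> 1" using k1 by simp
    then show ?thesis using rL M2 kk unfolding q by linarith
  qed
  have ad: "0 < real a / \<delta>" using a9 dp by simp
  have base: "exp 1 * real L / real d \<le> 42 * real a / \<delta>"
  proof -
    have "exp 1 * real L \<le> 3 * (7 * real k / \<delta>)"
      using exp_le L7 by (intro mult_mono) auto
    also have "\<dots> = real d * (42 * real a / \<delta>)" unfolding k_def by (simp add: field_simps)
    finally show ?thesis using dd by (simp add: field_simps)
  qed
  have b0: "0 \<le> exp 1 * real L / real d" by simp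
  have Phi42: "real Phi \<le> (42 * real a / \<delta>) ^ d"
    using Phi1 power_mono[OF base b0, of d] by linarith
  have P100: "2 * (42 * real a / \<delta>) ^ d < (100 * real a / \<delta>) ^ d"
  proof -
    have "(100 * real a / \<delta>) ^ d = (100/42) ^ d * (42 * real a / \<delta>) ^ d"
      by (simp add: power_mult_distrib[symmetric])
    moreover have "(100/42::real) ^ 1 \<le> (100/42) ^ d" by (rule power_increasing[OF dd]) simp
    moreover have t0: "0 < (42 * real a / \<delta>) ^ d" using ad by simp
    ultimately have "(100/42) * (42 * real a / \<delta>) ^ d \<le> (100 * real a / \<delta>) ^ d"
      by (simp add: mult_right_mono)
    moreover have "2 * (42 * real a / \<delta>) ^ d < (100/42) * (42 * real a / \<delta>) ^ d"
      using t0 by (intro mult_strict_right_mono) auto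
    ultimately show ?thesis by linarith
  qed
  have "2 * real Phi < (100 * real a / \<delta>) ^ d" using Phi42 P100 by linarith
  moreover have "(100 * real a / \<delta>) ^ d \<le> 2 ^ k"
  proof -
    have "100 * real a / \<delta> = (50 * real a) * (2 / \<delta>)" by simp
    also have "\<dots> \<le> real (2 ^ a) * 2 ^ a" using p50 pd dp by (intro mult_mono) auto
    also have "\<dots> = 2 ^ (2 * a)" by (simp add: power_add mult_2)
    finally have "(100 * real a / \<delta>) ^ d \<le> (2 ^ (2 * a)) ^ d"
      by (rule power_mono) (use ad in simp)
    also have "\<dots> = 2 ^ k" unfolding k_def by (simp add: power_mult[symmetric] mult.commute mult.left_commute)
    finally show ?thesis .
  qed
  ultimately have PhiK: "2 * real Phi < 2 ^ k" by linarith
  have br: "2 ^ k * (3 * M choose (2 * M + k)) \<le> 3 * M choose (2 * M)" by (rule binom_ratio[OF kM])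
  have eN: "m + M = 3 * M" "m + k = 2 * M + k" "m = 2 * M" unfolding m_def by simp_all
  have ratio0: "2 * (3 * M choose (2 * M + k)) * Phi < 3 * M choose (2 * M)"
  proof (cases "3 * M choose (2 * M + k) = 0")
    case True
    have "0 < 3 * M choose (2 * M)" by simp
    then show ?thesis unfolding True by simp
  next
    case False
    then have Cp: "real (3 * M choose (2 * M + k)) > 0" by simp
    have "real (2 * (3 * M choose (2 * M + k)) * Phi) = real (3 * M choose (2 * M + k)) * (2 * real Phi)"
      by (simp add: algebra_simps)
    also have "\<dots> < real (3 * M choose (2 * M + k)) * 2 ^ k" using Cp PhiK by simp
    also have "\<dots> \<le> real (3 * M choose (2 * M))"
    proof -
      have "real (2 ^ k * (3 * M choose (2 * M + k))) \<le> real (3 * M choose (2 * M))"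
        using br by (simp only: of_nat_le_iff)
      then show ?thesis by (simp add: mult.commute)
    qed
    finally show ?thesis by linarith
  qed
  have ratio: "2 * ((m + M) choose (m + k)) * Phi < (m + M) choose m"
    using ratio0 unfolding eN(1,2) unfolding m_def .
  have mb: "real m \<le> 216 * (real d / \<delta>) * u"
  proof -
    have "real m \<le> 4 * real k / \<delta> + 2" unfolding m_def using M2 by simp
    also have "\<dots> \<le> 6 * real k / \<delta>"
    proof -
      have q: "4 * real k / \<delta> = 4 * (real k / \<delta>)" "6 * real k / \<delta> = 6 * (real k / \<delta>)" by simp_all
      have "real k \<ge> 1" using k1 by simp
      then show ?thesis using kk unfolding q by linarith
    qed
    also have "\<dots> = 12 * real d * real a / \<delta>" unfolding k_def by simp
    also have "\<dots> \<le> 12 * real d * (18 * u) / \<delta>" using a18 dp by (intro divide_right_mono mult_left_mono) auto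
    also have "\<dots> = 216 * (real d / \<delta>) * u" by simp
    finally show ?thesis .
  qed
  show ?thesis by (rule that[OF c1 c2 ratio[unfolded Phi_def L_def] mb[unfolded u_def]])
qed

lemma dom_le: "dominating T X \<Longrightarrow> domination_number T \<le> card X"
  unfolding domination_number_def by (rule Least_le) blast

theorem theorem1p6:
  shows "\<exists>C::real. C > 0 \<and>
    (\<forall>(\<delta>::real) (d::nat) (T::nat trigraph).
        0 < \<delta> \<and> \<delta> \<le> 1 \<and> d \<ge> 1 \<and> is_trigraph T
        \<and> min_degree_ge T (\<delta> * real (card (verts T)))
        \<and> vc_dim_le T d
      \<longrightarrow> real (domination_number T) \<le> C * (real d / \<delta>) * ln (2 / \<delta>))"
proof (intro exI[of _ 216] conjI allI impI)
  show "(216::real) > 0" by simp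
  fix \<delta> :: real and d :: nat and T :: "nat trigraph"
  assume H: "0 < \<delta> \<and> \<delta> \<le> 1 \<and> d \<ge> 1 \<and> is_trigraph T
        \<and> min_degree_ge T (\<delta> * real (card (verts T))) \<and> vc_dim_le T d"
  then have dp: "0 < \<delta>" and d1: "\<delta> \<le> 1" and dd: "1 \<le> d" and T: "is_trigraph T"
    and md: "min_degree_ge T (\<delta> * real (card (verts T)))" and vc: "vc_dim_le T d" by auto
  have lnp: "0 \<le> ln (2 / \<delta>)" using dp d1 by (simp add: field_simps)
  have rhs0: "0 \<le> 216 * (real d / \<delta>) * ln (2 / \<delta>)" using dp lnp by simp
  show "real (domination_number T) \<le> 216 * (real d / \<delta>) * ln (2 / \<delta>)"
  proof (cases "card (verts T) = 0")
    case True
    then have "verts T = {}" using trig_fin[OF T] by simp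
    then have "dominating T {}" unfolding dominating_def by simp
    then have "domination_number T \<le> 0" using dom_le[of T "{}"] by simp
    then show ?thesis using rhs0 by simp
  next
    case False
    then have n0: "0 < card (verts T)" by simp
    obtain m M k :: nat where c1: "\<delta> * real M \<ge> 8" and c2: "real k \<le> \<delta> * real M / 2"
      and c3: "2 * ((m + M) choose (m + k)) * (\<Sum>i\<le>d. (m + k) choose i) < (m + M) choose m"
      and c4: "real m \<le> 216 * (real d / \<delta>) * ln (2 / \<delta>)"
      using params[OF dp d1 dd] by blast
    obtain X where X: "dominating T X" "card X \<le> m"
      using main_count[OF T n0 dp md vc c1 c2 c3] by blast
    have "domination_number T \<le> m" using dom_le[OF X(1)] X(2) by simp
    then have "real (domination_number T) \<le> real m" by simp
    then show ?thesis using c4 by linarith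
  qed
qed

end
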